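(* Let $d\ge 2$, let $P\subset\mathbb{R}^d$ be a generic convex simplicial $d$-dimensional polytope, and let $P'\subset\mathbb{R}^{d+1}$ be its lifting. Let $P_+$ be the intersection, over all facets $F$ of $P'$, of the closed upper half-spaces bounded by $\mathrm{aff}(F)$, and let $T_+$ be the intersection, over all facets $F$ of $P'$, of the closed upper half-spaces bounded by the hyperplane through the origin parallel to $\mathrm{aff}(F)$. Then for each facet of $T_+$ there is an unbounded facet of $P_+$ parallel to it.
   Context: $P$ is generic if no $d+2$ of its vertices lie on a common $(d-1)$-dimensional sphere and $P$ is not a $d$-simplex. With $V$ the vertex set of $P$ and $f(x_1,\dots,x_d)=(x_1,\dots,x_d,x_1^2+\dots+x_d^2)$, the lifting $P'$ is the convex hull of $f(V)$ in $\mathbb{R}^{d+1}$; it is a $(d+1)$-dimensional simplicial polytope none of whose facet hyperplanes is vertical (i.e. every facet normal has nonzero last coordinate). For a non-vertical hyperplane $H$ in $\mathbb{R}^{d+1}$, its closed upper half-space is the set of points lying on or above $H$ with respect to the last coordinate. *)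

theory Defs
  imports "HOL-Analysis.Analysis"
begin

text \<open>R^{d+1} is modelled as 'a \<times> real, with 'a a Euclidean space of dimension d;
  the last coordinate is the snd component.\<close>

definition vertices :: "'a::euclidean_space set \<Rightarrow> 'a set" where
  "vertices P = {v. v extreme_point_of P}"

definition simplicial_polytope :: "'a::euclidean_space set \<Rightarrow> bool" where
  "simplicial_polytope P \<longleftrightarrow> polytope P \<and> (\<forall>F. F facet_of P \<longrightarrow> (\<exists>n. n simplex F))"

definition generic_polytope :: "'a::euclidean_space set \<Rightarrow> bool" where
  "generic_polytope P \<longleftrightarrow>
     \<not> (\<exists>S c r. S \<subseteq> vertices P \<and> card S = DIM('a) + 2 \<and> r > 0 \<and> S \<subseteq> sphere c r)
     \<and> \<not> (int DIM('a)) simplex P"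

definition lift_map :: "'a::euclidean_space \<Rightarrow> 'a \<times> real" where
  "lift_map x = (x, (norm x)\<^sup>2)"

definition lifting :: "'a::euclidean_space set \<Rightarrow> ('a \<times> real) set" where
  "lifting P = convex hull (lift_map ` vertices P)"

definition upper_halfspace :: "('a::euclidean_space \<times> real) set \<Rightarrow> ('a \<times> real) set" where
  "upper_halfspace H = {p. \<exists>q\<in>H. fst q = fst p \<and> snd q \<le> snd p}"

definition direction_of :: "'b::real_vector set \<Rightarrow> 'b set" where
  "direction_of A = {x - y | x y. x \<in> A \<and> y \<in> A}"

definition P_plus :: "'a::euclidean_space set \<Rightarrow> ('a \<times> real) set" where
  "P_plus P = \<Inter> {upper_halfspace (affine hull F) | F. F facet_of lifting P}"

definition T_plus :: "'a::euclidean_space set \<Rightarrow> ('a \<times> real) set" where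
  "T_plus P = \<Inter> {upper_halfspace (direction_of (affine hull F)) | F. F facet_of lifting P}"

definition parallel_sets :: "'b::euclidean_space set \<Rightarrow> 'b set \<Rightarrow> bool" where
  "parallel_sets A B \<longleftrightarrow> (\<exists>v. affine hull A = (\<lambda>x. v + x) ` (affine hull B))"

end

theory Submission
  imports Defs
begin

lemma abstract_part:
  fixes I :: "'i set" and a :: "'i \<Rightarrow> 'a::euclidean_space" and c :: "'i \<Rightarrow> real"
    and PP TT :: "('a \<times> real) set"
  assumes finI: "finite I"
    and PPdef: "PP = (\<Inter>i\<in>I. {v. a i \<bullet> fst v + c i \<le> snd v})"
    and TTdef: "TT = (\<Inter>i\<in>I. {v. a i \<bullet> fst v \<le> snd v})"
    and Gf: "G facet_of TT"
  shows "\<exists>H. H facet_of PP \<and> \<not> bounded H \<and> parallel_sets H G"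
proof -
  have inner_pair: "\<And>(u::'a \<times> real) v. u \<bullet> v = fst u \<bullet> fst v + snd u * snd v"
    by (simp add: inner_prod_def)
  have memTT: "\<And>v. v \<in> TT \<longleftrightarrow> (\<forall>i\<in>I. a i \<bullet> fst v \<le> snd v)"
    by (simp add: TTdef)
  have memPP: "\<And>v. v \<in> PP \<longleftrightarrow> (\<forall>i\<in>I. a i \<bullet> fst v + c i \<le> snd v)"
    by (simp add: PPdef)
  have TTeq: "TT = \<Inter> ((\<lambda>i. {v. (a i, -1) \<bullet> v \<le> 0}) ` I)"
    by (auto simp: TTdef inner_pair)
  have polyTT: "polyhedron TT"
    unfolding TTeq by (rule polyhedron_Inter) (auto simp: finI polyhedron_halfspace_le)
  have intTT: "interior TT \<noteq> {}"
  proof -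
    let ?O = "\<Inter>i\<in>I. {v::'a\<times>real. (a i, -1) \<bullet> v < 0}"
    have "open ?O" using finI by (auto intro!: open_halfspace_lt)
    moreover have "?O \<subseteq> TT" using less_imp_le by (fastforce simp: TTdef inner_pair)
    moreover have "((0::'a), 1::real) \<in> ?O" by (simp add: inner_pair)
    ultimately show ?thesis using interior_maximal by blast
  qed
  have affTT: "aff_dim TT = int DIM('a) + 1"
    using aff_dim_nonempty_interior[OF intTT] by simp
  obtain n b where n0: "n \<noteq> 0" and TTsub: "TT \<subseteq> {x. n \<bullet> x \<le> b}" and Geq0: "G = TT \<inter> {x. n \<bullet> x = b}"
    using facet_of_polyhedron[OF polyTT Gf] by blast
  have Gne: "G \<noteq> {}" and affG: "aff_dim G = int DIM('a)"
    using Gf affTT by (auto simp: facet_of_def)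
  define p where "p = fst n"
  define s where "s = snd n"
  have nv: "\<And>v. n \<bullet> v = p \<bullet> fst v + s * snd v" by (simp add: inner_pair p_def s_def)
  define M where "M = (\<lambda>x. \<Sum>i\<in>I. \<bar>a i \<bullet> x\<bar>)"
  have bigTT: "\<And>x t. M x \<le> t \<Longrightarrow> (x, t) \<in> TT"
  proof -
    fix x t assume "M x \<le> t"
    have "\<And>i. i \<in> I \<Longrightarrow> a i \<bullet> x \<le> M x"
    proof -
      fix i assume "i \<in> I"
      have "\<bar>a i \<bullet> x\<bar> \<le> M x" unfolding M_def
        by (rule member_le_sum[OF \<open>i\<in>I\<close> _ finI]) simp
      then show "a i \<bullet> x \<le> M x" by linarith
    qed
    then show "(x, t) \<in> TT" using \<open>M x \<le> t\<close> by (force simp: memTT)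
  qed
  have big: "\<And>x t. M x \<le> t \<Longrightarrow> p \<bullet> x + s * t \<le> b"
    using bigTT TTsub nv by fastforce
  have M0: "M 0 = 0" by (simp add: M_def)
  have sle: "s \<le> 0"
  proof (rule ccontr)
    assume "\<not> s \<le> 0"
    then have "s > 0" by simp
    have "p \<bullet> 0 + s * ((\<bar>b\<bar>+1)/s) \<le> b" by (rule big) (use \<open>s>0\<close> M0 in simp)
    then show False using \<open>s>0\<close> by simp
  qed
  have sne: "s \<noteq> 0"
  proof
    assume "s = 0"
    then have "p \<noteq> 0" using n0 by (simp add: p_def s_def prod_eq_iff)
    then have pp: "p \<bullet> p > 0" by simp
    have "p \<bullet> (((\<bar>b\<bar>+1)/(p \<bullet> p)) *\<^sub>R p) + s * M (((\<bar>b\<bar>+1)/(p \<bullet> p)) *\<^sub>R p) \<le> b"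
      by (rule big) simp
    then show False using pp \<open>s = 0\<close> by simp
  qed
  have sneg: "s < 0" using sle sne by simp
  obtain g where gG: "g \<in> G" using Gne by blast
  have b0: "b = 0"
  proof -
    have "(0::'a\<times>real) \<in> TT" by (simp add: memTT)
    then have "0 \<le> b" using TTsub by auto
    have "g \<in> TT" "n \<bullet> g = b" using gG Geq0 by auto
    then have "2 *\<^sub>R g \<in> TT" by (auto simp: memTT)
    then have "n \<bullet> (2 *\<^sub>R g) \<le> b" using TTsub by auto
    then show ?thesis using \<open>n \<bullet> g = b\<close> \<open>0 \<le> b\<close> by simp
  qed
  define q where "q = -(1/s) *\<^sub>R p"
  have nq: "\<And>v. n \<bullet> v = s * (snd v - q \<bullet> fst v)"
    using sne by (simp add: nv q_def algebra_simps)
  have TTq: "\<And>v. v \<in> TT \<Longrightarrow> q \<bullet> fst v \<le> snd v"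
  proof -
    fix v assume "v \<in> TT"
    then have "s * (snd v - q \<bullet> fst v) \<le> 0" using TTsub b0 nq by auto
    then show "q \<bullet> fst v \<le> snd v" using sneg by (simp add: mult_le_0_iff)
  qed
  have Gmem: "\<And>v. v \<in> G \<longleftrightarrow> v \<in> TT \<and> snd v = q \<bullet> fst v"
    using Geq0 b0 nq sne by auto
  define U where "U = {x. \<forall>i\<in>I. a i \<bullet> x \<le> q \<bullet> x}"
  define f where "f = (\<lambda>x::'a. (x, q \<bullet> x))"
  have linf: "linear f" unfolding f_def
    by (rule linearI) (auto simp: inner_add_right)
  have blinf: "bounded_linear f" using linf by (simp add: linear_conv_bounded_linear)
  have injf: "inj f" unfolding f_def by (rule injI) simp
  have GfU: "G = f ` U"
  proof
    show "G \<subseteq> f ` U"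
    proof
      fix v assume "v \<in> G"
      then have "v \<in> TT" "snd v = q \<bullet> fst v" using Gmem by auto
      then have "fst v \<in> U" "v = f (fst v)" by (auto simp: U_def memTT f_def prod_eq_iff)
      then show "v \<in> f ` U" by blast
    qed
    show "f ` U \<subseteq> G" by (auto simp: Gmem memTT U_def f_def)
  qed
  have affU: "aff_dim U = int DIM('a)"
    using affG GfU aff_dim_injective_linear_image[OF linf injf] by simp
  have ahU: "affine hull U = UNIV" using affU aff_dim_eq_full by blast
  have convU: "convex U"
  proof -
    have "U = (\<Inter>i\<in>I. {x. (a i - q) \<bullet> x \<le> 0})" by (auto simp: U_def inner_diff_left)
    then show ?thesis by (auto intro!: convex_INT convex_halfspace_le)
  qed
  have "0 \<in> U" by (simp add: U_def)
  then have "rel_interior U \<noteq> {}" using convU rel_interior_eq_empty by blast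
  then have intU: "interior U \<noteq> {}" using rel_interior_interior[OF ahU] by simp
  define K where "K = {i\<in>I. a i \<noteq> q}"
  have finK: "finite K" using finI by (simp add: K_def)
  define Z where "Z = \<Union> (insert {0} ((\<lambda>i. {x. (q - a i) \<bullet> x = 0}) ` K))"
  have negZ: "negligible Z" unfolding Z_def
  proof (rule negligible_Union)
    show "finite (insert {0} ((\<lambda>i. {x::'a. (q - a i) \<bullet> x = 0}) ` K))" using finK by simp
  next
    fix T assume "T \<in> insert {0} ((\<lambda>i. {x::'a. (q - a i) \<bullet> x = 0}) ` K)"
    then show "negligible T"
    proof
      assume "T = {0}" then show ?thesis by simp
    next
      assume "T \<in> (\<lambda>i. {x::'a. (q - a i) \<bullet> x = 0}) ` K"
      then obtain i where "i \<in> K" "T = {x. (q - a i) \<bullet> x = 0}" by blast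
      then show ?thesis using negligible_hyperplane[of "q - a i" 0] by (auto simp: K_def)
    qed
  qed
  have "\<not> interior U \<subseteq> Z"
    using negZ negligible_subset open_not_negligible[OF open_interior intU] by blast
  then obtain x0 where x0i: "x0 \<in> interior U" and x0Z: "x0 \<notin> Z" by blast
  have x0U: "x0 \<in> U" using x0i interior_subset by blast
  have x00: "x0 \<noteq> 0" using x0Z by (auto simp: Z_def)
  have x0K: "\<And>i. i \<in> K \<Longrightarrow> a i \<bullet> x0 < q \<bullet> x0"
  proof -
    fix i assume iK: "i \<in> K"
    then have "(q - a i) \<bullet> x0 \<noteq> 0" using x0Z by (auto simp: Z_def)
    moreover have "a i \<bullet> x0 \<le> q \<bullet> x0" using x0U iK by (auto simp: U_def K_def)
    ultimately show "a i \<bullet> x0 < q \<bullet> x0" by (simp add: inner_diff_left)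
  qed
  have Jne: "\<exists>i\<in>I. a i = q"
  proof (rule ccontr)
    assume "\<not> (\<exists>i\<in>I. a i = q)"
    then have IK: "\<And>i. i \<in> I \<Longrightarrow> i \<in> K" by (auto simp: K_def)
    define t where "t = Max (insert (q \<bullet> x0 - 1) ((\<lambda>i. a i \<bullet> x0) ` I))"
    have "t < q \<bullet> x0" unfolding t_def using finI x0K IK by (simp add: Max_less_iff)
    moreover have "(x0, t) \<in> TT" unfolding memTT t_def using finI by (auto intro: Max_ge)
    ultimately show False using TTq by fastforce
  qed
  define J where "J = {i\<in>I. a i = q}"
  have finJ: "finite J" "J \<noteq> {}" using finI Jne by (auto simp: J_def)
  define j where "j = (SOME j. j \<in> J \<and> c j = Max (c ` J))"
  have "\<exists>j. j \<in> J \<and> c j = Max (c ` J)" using Max_in[of "c ` J"] finJ by fastforce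
  then have jJ: "j \<in> J" and cj: "c j = Max (c ` J)" unfolding j_def by (metis (mono_tags, lifting) someI_ex)+
  have jI: "j \<in> I" and ajq: "a j = q" using jJ by (auto simp: J_def)
  have cmax: "\<And>i. i \<in> I \<Longrightarrow> a i = q \<Longrightarrow> c i \<le> c j"
    using finJ cj by (auto simp: J_def)

  have PPeq: "PP = (\<Inter>i\<in>I. {v. (a i, -1) \<bullet> v \<le> - c i})"
    by (auto simp: PPdef inner_pair; smt (verit))
  have convPP: "convex PP" unfolding PPeq by (auto intro!: convex_INT convex_halfspace_le)
  have intPP: "interior PP \<noteq> {}"
  proof -
    let ?O = "\<Inter>i\<in>I. {v::'a\<times>real. (a i, -1) \<bullet> v < - c i}"
    have "open ?O" using finI by (auto intro!: open_halfspace_lt)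
    moreover have "?O \<subseteq> PP" using less_imp_le by (fastforce simp: PPdef inner_pair)
    moreover have "((0::'a), (\<Sum>i\<in>I. \<bar>c i\<bar>) + 1) \<in> ?O"
    proof -
      have "\<And>i. i \<in> I \<Longrightarrow> c i < (\<Sum>i\<in>I. \<bar>c i\<bar>) + 1"
      proof -
        fix i assume "i \<in> I"
        have "\<bar>c i\<bar> \<le> (\<Sum>i\<in>I. \<bar>c i\<bar>)" by (rule member_le_sum[OF \<open>i\<in>I\<close> _ finI]) simp
        then show "c i < (\<Sum>i\<in>I. \<bar>c i\<bar>) + 1" by linarith
      qed
      then show ?thesis by (simp add: inner_pair) (smt (verit))
    qed
    ultimately show ?thesis using interior_maximal by blast
  qed
  have affPP: "aff_dim PP = int DIM('a) + 1"
    using aff_dim_nonempty_interior[OF intPP] by simp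
  define w where "w = ((-q, 1) :: 'a \<times> real)"
  have wv: "\<And>v. w \<bullet> v = snd v - q \<bullet> fst v" by (simp add: w_def inner_pair)
  have w0: "w \<noteq> 0" by (simp add: w_def prod_eq_iff)
  define H where "H = PP \<inter> {v. w \<bullet> v = c j}"
  have PPw: "\<And>v. v \<in> PP \<Longrightarrow> w \<bullet> v \<ge> c j"
    using jI ajq by (auto simp: memPP wv)
  have Hface: "H face_of PP" unfolding H_def
    by (rule face_of_Int_supporting_hyperplane_ge[OF convPP PPw])
  define V where "V = (\<Inter>i\<in>K. {y::'a. (q - a i) \<bullet> y > c i - c j})"
  have openV: "open V" unfolding V_def using finK by (auto intro!: open_halfspace_gt)
  define e where "e = (\<lambda>i. (q - a i) \<bullet> x0)"
  have epos: "\<And>i. i \<in> K \<Longrightarrow> e i > 0" using x0K by (simp add: e_def inner_diff_left)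
  define S where "S = 1 + (\<Sum>i\<in>K. \<bar>c i - c j\<bar> / e i)"
  have tnn: "\<And>i. i \<in> K \<Longrightarrow> 0 \<le> \<bar>c i - c j\<bar> / e i"
    using epos by (simp add: less_imp_le)
  have Spos: "S \<ge> 1" unfolding S_def using tnn by (simp add: sum_nonneg)
  have sV: "\<And>t. t \<ge> S \<Longrightarrow> t *\<^sub>R x0 \<in> V"
  proof -
    fix t assume tS: "t \<ge> S"
    show "t *\<^sub>R x0 \<in> V" unfolding V_def
    proof
      fix i assume iK: "i \<in> K"
      have "\<bar>c i - c j\<bar> / e i \<le> (\<Sum>i\<in>K. \<bar>c i - c j\<bar> / e i)"
        by (rule member_le_sum[OF iK _ finK]) (use tnn in auto)
      then have "\<bar>c i - c j\<bar> / e i + 1 \<le> t" using tS unfolding S_def by linarith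
      then have "(\<bar>c i - c j\<bar> / e i + 1) * e i \<le> t * e i" using epos[OF iK] by (simp add: mult_right_mono)
      then have "\<bar>c i - c j\<bar> + e i \<le> t * e i" using epos[OF iK] by (simp add: distrib_right)
      then have "c i - c j < t * e i" using epos[OF iK] by linarith
      then show "t *\<^sub>R x0 \<in> {y. c i - c j < (q - a i) \<bullet> y}" by (simp add: e_def)
    qed
  qed
  have Vne: "V \<noteq> {}" using sV by blast
  define g where "g = (\<lambda>y::'a. (y, q \<bullet> y + c j))"
  have gH: "\<And>y. y \<in> V \<Longrightarrow> g y \<in> H"
  proof -
    fix y assume yV: "y \<in> V"
    have "\<forall>i\<in>I. a i \<bullet> y + c i \<le> q \<bullet> y + c j"
    proof
      fix i assume iI: "i \<in> I"
      show "a i \<bullet> y + c i \<le> q \<bullet> y + c j"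
      proof (cases "a i = q")
        case True then show ?thesis using cmax[OF iI] by simp
      next
        case False
        then have "i \<in> K" using iI by (simp add: K_def)
        then have "(q - a i) \<bullet> y > c i - c j" using yV by (auto simp: V_def)
        then show ?thesis by (simp add: inner_diff_left)
      qed
    qed
    then show "g y \<in> H" by (simp add: H_def memPP g_def wv)
  qed
  have Hsub: "H \<subseteq> {v. w \<bullet> v = c j}" by (auto simp: H_def)
  have gU: "g ` UNIV = {v. w \<bullet> v = c j}"
  proof
    show "g ` UNIV \<subseteq> {v. w \<bullet> v = c j}" by (auto simp: g_def wv)
    show "{v. w \<bullet> v = c j} \<subseteq> g ` UNIV"
    proof
      fix v assume "v \<in> {v. w \<bullet> v = c j}"
      then have "v = g (fst v)" by (auto simp: g_def wv prod_eq_iff)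
      then show "v \<in> g ` UNIV" by blast
    qed
  qed
  have gf: "\<And>A. g ` A = (\<lambda>x. (0, c j) + x) ` (f ` A)"
    by (auto simp: g_def f_def image_image)
  have ahV: "affine hull V = UNIV" using affine_hull_open[OF openV Vne] .
  have "affine hull (g ` V) = g ` UNIV"
    by (simp add: gf affine_hull_translation affine_hull_linear_image[OF blinf, symmetric] ahV)
  moreover have "g ` V \<subseteq> H" using gH by blast
  ultimately have "g ` UNIV \<subseteq> affine hull H" by (metis hull_mono)
  moreover have "affine hull H \<subseteq> g ` UNIV"
    using Hsub gU by (metis affine_hyperplane hull_minimal)
  ultimately have ahH: "affine hull H = g ` UNIV" by blast
  have "aff_dim H = aff_dim {v. w \<bullet> v = c j}" by (metis aff_dim_affine_hull ahH gU)
  also have "\<dots> = int DIM('a\<times>real) - 1" using aff_dim_hyperplane[OF w0] by simp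
  also have "\<dots> = int DIM('a)" by simp
  finally have affH: "aff_dim H = int DIM('a)" .
  have Hne: "H \<noteq> {}" using gH Vne by blast
  have Hfacet: "H facet_of PP" using Hface Hne affH affPP by (simp add: facet_of_def)
  have unb: "\<not> bounded H"
  proof
    assume "bounded H"
    then obtain B where B: "\<And>v. v \<in> H \<Longrightarrow> norm v \<le> B" by (auto simp: bounded_iff)
    define t where "t = max S ((\<bar>B\<bar> + 1) / norm x0)"
    have nx0: "norm x0 > 0" using x00 by simp
    have "g (t *\<^sub>R x0) \<in> H" using gH sV by (simp add: t_def)
    then have n1: "norm (g (t *\<^sub>R x0)) \<le> B" by (rule B)
    have n2: "norm (t *\<^sub>R x0) \<le> norm (g (t *\<^sub>R x0))"
      unfolding g_def using norm_fst_le by (metis fst_conv)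
    have "(\<bar>B\<bar> + 1) / norm x0 \<le> t" by (simp add: t_def)
    then have n3: "\<bar>B\<bar> + 1 \<le> t * norm x0" using nx0 by (simp add: divide_le_eq)
    have tS: "S \<le> t" by (simp add: t_def)
    have "t \<ge> 0" using tS Spos by linarith
    then have n4: "norm (t *\<^sub>R x0) = t * norm x0" by (metis norm_scaleR abs_of_nonneg)
    have n5: "B < \<bar>B\<bar> + 1" by linarith
    from n1 n2 n3 n4 n5 show False by argo
  qed
  have ahG: "affine hull G = f ` UNIV"
    unfolding GfU affine_hull_linear_image[OF blinf, symmetric] ahU ..
  have "affine hull H = (\<lambda>x. (0, c j) + x) ` (affine hull G)"
    unfolding ahH ahG by (rule gf)
  then have par: "parallel_sets H G" unfolding parallel_sets_def by blast
  show ?thesis by (rule exI[of _ H]) (intro conjI Hfacet unb par)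
qed


lemma sphere_alg:
  fixes x p :: "'a::euclidean_space" and s b :: real
  assumes "s \<noteq> 0" and "p \<bullet> x + s * (norm x)\<^sup>2 = b"
  shows "(norm (x + (1/(2 * s)) *\<^sub>R p))\<^sup>2 = b/s + (norm p)\<^sup>2/(4 * s^2)"
proof -
  define k where "k = 1/(2 * s)"
  have e1: "(norm (x + k *\<^sub>R p))\<^sup>2 = (norm x)\<^sup>2 + 2*k*(p \<bullet> x) + k^2 * (norm p)\<^sup>2"
    by (simp only: power2_norm_eq_inner) (simp add: inner_add_left inner_add_right inner_commute algebra_simps power2_eq_square)
  have e2: "(norm x)\<^sup>2 = (b - p \<bullet> x)/s" using assms by (simp add: field_simps)
  show ?thesis unfolding k_def[symmetric] e1 e2 using assms(1) by (simp add: k_def field_simps power2_eq_square)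
qed

lemma face_hull_sub:
  fixes T :: "'b::euclidean_space set"
  assumes c: "compact T" and Fface: "F face_of convex hull T"
  shows "\<exists>S'. S' \<subseteq> T \<and> F = convex hull S'"
proof -
  obtain S' where "S' \<subseteq> T" and "F = convex hull S'"
    using face_of_convex_hull_subset[OF c Fface] by blast
  then show ?thesis by blast
qed

lemma lifting_props:
  fixes P :: "'a::euclidean_space set"
  assumes dim2: "DIM('a) \<ge> 2" and cvx: "convex P" and simpl: "simplicial_polytope P"
    and affP: "aff_dim P = int DIM('a)" and gen: "generic_polytope P"
  shows "finite {F. F facet_of lifting P} \<and>
    (\<forall>F. F facet_of lifting P \<longrightarrow> (\<exists>a c. affine hull F = {v. snd v = a \<bullet> fst v + c}))"
proof -
  have inner_pair: "\<And>(u::'a \<times> real) v. u \<bullet> v = fst u \<bullet> fst v + snd u * snd v"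
    by (simp add: inner_prod_def)
  define V where "V = vertices P"
  have polyP: "polytope P" using simpl by (simp add: simplicial_polytope_def)
  then obtain v0 where finv0: "finite v0" and Pv0: "P = convex hull v0" by (auto simp: polytope_def)
  have VP: "P = convex hull V"
    using Krein_Milman_polytope[OF finv0] Pv0 by (simp add: V_def vertices_def)
  have "V \<subseteq> v0" using extreme_point_of_convex_hull Pv0 by (auto simp: V_def vertices_def)
  then have finV: "finite V" using finv0 finite_subset by blast
  have VsubP: "V \<subseteq> P" by (auto simp: V_def vertices_def extreme_point_of_def)
  define L where "L = lifting P"
  have Leq: "L = convex hull (lift_map ` V)" by (simp add: L_def lifting_def V_def)
  have polyL: "polyhedron L" using Leq finV by (simp add: polytope_convex_hull polytope_imp_polyhedron)
  have finfacets: "finite {F. F facet_of L}"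
  proof -
    have "finite {F. F face_of L}" using Leq finV by (simp add: polytope_convex_hull finite_polytope_faces)
    then show ?thesis by (rule finite_subset[rotated]) (auto simp: facet_of_imp_face_of)
  qed
  have liftin: "\<And>x. x \<in> V \<Longrightarrow> lift_map x \<in> L" unfolding Leq by (simp add: hull_inc)
  have liftn: "\<And>n x. n \<bullet> lift_map x = fst n \<bullet> x + snd n * (norm x)\<^sup>2"
    by (simp add: lift_map_def inner_prod_def)
  have affV: "aff_dim V = int DIM('a)" using affP VP by (simp add: aff_dim_convex_hull)
  have cardV1: "int DIM('a) + 1 \<le> int (card V)" using aff_dim_le_card[OF finV] affV by simp
  have cardV: "DIM('a) + 2 \<le> card V"
  proof (rule ccontr)
    assume "\<not> DIM('a) + 2 \<le> card V"
    then have "card V = DIM('a) + 1" using cardV1 by simp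
    then have "\<not> affine_dependent V" using affine_independent_iff_card[of V] finV affV by simp
    then have "int DIM('a) simplex P" unfolding simplex_def using VP \<open>card V = DIM('a) + 1\<close> by auto
    then show False using gen by (simp add: generic_polytope_def)
  qed
  have Vne: "V \<noteq> {}" using cardV by auto
  have hypP: "\<And>p b. p \<noteq> 0 \<Longrightarrow> \<not> P \<subseteq> {y. p \<bullet> y = b}"
  proof
    fix p :: 'a and b assume "p \<noteq> 0" "P \<subseteq> {y. p \<bullet> y = b}"
    then have "aff_dim P \<le> aff_dim {y. p \<bullet> y = b}" using aff_dim_subset by blast
    then show False using affP \<open>p \<noteq> 0\<close> by simp
  qed
  have affL: "aff_dim L = int DIM('a) + 1"
  proof (rule ccontr)
    assume "aff_dim L \<noteq> int DIM('a) + 1"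
    moreover have "aff_dim L \<le> int DIM('a \<times> real)" by (rule aff_dim_le_DIM)
    ultimately have "aff_dim L < int DIM('a \<times> real)" by simp
    then obtain n b where n0: "n \<noteq> 0" and Lh: "L \<subseteq> {x. n \<bullet> x = b}" by (rule aff_lowdim_subset_hyperplane)
    define p where "p = fst n"
    define s where "s = snd n"
    have eqV: "p \<bullet> x + s * (norm x)\<^sup>2 = b" if "x \<in> V" for x
    proof -
      have "n \<bullet> lift_map x = b" using liftin[OF that] Lh by blast
      then show ?thesis using liftn[of n x] by (simp add: p_def s_def)
    qed
    show False
    proof (cases "s = 0")
      case True
      then have "p \<noteq> 0" using n0 by (simp add: p_def s_def prod_eq_iff)
      have "V \<subseteq> {y. p \<bullet> y = b}" using eqV True by auto
      then have "P \<subseteq> {y. p \<bullet> y = b}" unfolding VP by (rule hull_minimal) (rule convex_hyperplane)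
      then show False using hypP[OF \<open>p \<noteq> 0\<close>] by blast
    next
      case False
      define c0 where "c0 = - ((1/(2 * s)) *\<^sub>R p)"
      define R where "R = b/s + (norm p)\<^sup>2/(4 * s^2)"
      have nr: "(norm (x - c0))\<^sup>2 = R" if "x \<in> V" for x
        unfolding c0_def R_def using sphere_alg[OF False eqV[OF that]] by (simp add: diff_conv_add_uminus)
      have Rpos: "R > 0"
      proof (rule ccontr)
        assume "\<not> R > 0"
        have "x = c0" if "x \<in> V" for x
        proof -
          have "(norm (x - c0))\<^sup>2 \<le> 0" using nr[OF that] \<open>\<not> R > 0\<close> by simp
          then show "x = c0" by simp
        qed
        then have "V \<subseteq> {c0}" by blast
        then have "aff_dim V \<le> aff_dim {c0}" by (rule aff_dim_subset)
        then show False using affV dim2 by simp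
      qed
      have "V \<subseteq> sphere c0 (sqrt R)"
      proof
        fix x assume "x \<in> V"
        then have "norm (x - c0) = sqrt R" using nr by (metis norm_ge_zero real_sqrt_unique)
        then show "x \<in> sphere c0 (sqrt R)" by (simp add: dist_norm norm_minus_commute)
      qed
      moreover obtain S where "S \<subseteq> V" "card S = DIM('a) + 2" using obtain_subset_with_card_n[OF cardV] by blast
      moreover have "sqrt R > 0" using Rpos by simp
      ultimately show False using gen unfolding generic_polytope_def V_def by blast
    qed
  qed
  have "\<forall>F. F facet_of L \<longrightarrow> (\<exists>a c. affine hull F = {v. snd v = a \<bullet> fst v + c})"
  proof (intro allI impI)
    fix F assume Ff: "F facet_of L"
    then have affF: "aff_dim F = int DIM('a)" and Fne: "F \<noteq> {}" using affL by (auto simp: facet_of_def)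
    obtain n b where n0: "n \<noteq> 0" and Lle: "L \<subseteq> {x. n \<bullet> x \<le> b}" and Feq: "F = L \<inter> {x. n \<bullet> x = b}"
      using facet_of_polyhedron[OF polyL Ff] by blast
    have ahF: "affine hull F = {x. n \<bullet> x = b}"
    proof (rule affine_dim_equal)
      show "affine (affine hull F)" by simp
      show "affine {x. n \<bullet> x = b}" by (rule affine_hyperplane)
      show "affine hull F \<noteq> {}" using Fne by simp
      show "affine hull F \<subseteq> {x. n \<bullet> x = b}" using Feq by (intro hull_minimal affine_hyperplane) auto
      show "aff_dim (affine hull F) = aff_dim {x. n \<bullet> x = b}" using affF n0 by simp
    qed
    define p where "p = fst n"
    define s where "s = snd n"
    have sne: "s \<noteq> 0"
    proof
      assume s0: "s = 0"
      then have p0: "p \<noteq> 0" using n0 by (simp add: p_def s_def prod_eq_iff)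
      have nlift: "\<And>x. n \<bullet> lift_map x = p \<bullet> x" using s0 by (simp add: liftn p_def s_def)
      have "V \<subseteq> {y. p \<bullet> y \<le> b}"
      proof
        fix x assume "x \<in> V"
        then have "n \<bullet> lift_map x \<le> b" using liftin Lle by blast
        then show "x \<in> {y. p \<bullet> y \<le> b}" using nlift[of x] by simp
      qed
      then have Ple: "P \<subseteq> {y. p \<bullet> y \<le> b}" unfolding VP by (rule hull_minimal) (rule convex_halfspace_le)
      define E where "E = P \<inter> {y. p \<bullet> y = b}"
      have Eface: "E face_of P" unfolding E_def using cvx Ple by (intro face_of_Int_supporting_hyperplane_le) auto
      define W where "W = {x\<in>V. p \<bullet> x = b}"
      have cptV: "compact (lift_map ` V)" using finV by (simp add: finite_imp_compact)
      have Fface: "F face_of convex hull (lift_map ` V)" using Ff Leq by (simp add: facet_of_def)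
      have "\<exists>S'. S' \<subseteq> lift_map ` V \<and> F = convex hull S'" by (rule face_hull_sub[OF cptV Fface])
      then obtain S' where S'sub: "S' \<subseteq> lift_map ` V" and FS': "F = convex hull S'" by blast
      have S'W: "S' \<subseteq> lift_map ` W"
      proof
        fix y assume "y \<in> S'"
        then have "y \<in> F" unfolding FS' by (rule hull_inc)
        then have "y \<in> L \<inter> {x. n \<bullet> x = b}" using Feq by simp
        then have nyb: "n \<bullet> y = b" by simp
        obtain x where xV: "x \<in> V" and yx: "y = lift_map x" using S'sub \<open>y \<in> S'\<close> by blast
        have "p \<bullet> x = b" using nyb nlift[of x] yx by simp
        then have "x \<in> W" using xV by (simp add: W_def)
        then show "y \<in> lift_map ` W" using yx by (rule rev_image_eqI)
      qed
      have "S' \<noteq> {}" using Fne FS' by auto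
      then have "W \<noteq> {}" using S'W by auto
      moreover have "W \<subseteq> E" using VsubP by (auto simp: W_def E_def)
      ultimately have Ene: "E \<noteq> {}" by blast
      have "E \<noteq> P" using hypP[OF p0, of b] by (auto simp: E_def)
      then obtain F0 where F0f: "F0 facet_of P" and EF0: "E \<subseteq> F0"
        using face_of_polyhedron_subset_facet[OF polytope_imp_polyhedron[OF polyP] Eface Ene] by blast
      obtain m where "m simplex F0" using simpl F0f by (auto simp: simplicial_polytope_def)
      then obtain C where Cind: "\<not> affine_dependent C" and cardC: "int (card C) = m + 1" and F0C: "F0 = convex hull C"
        by (auto simp: simplex_def)
      have "aff_dim F0 = m" using \<open>m simplex F0\<close> by (rule aff_dim_simplex)
      moreover have "aff_dim F0 = int DIM('a) - 1" using F0f affP by (simp add: facet_of_def)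
      ultimately have cardC': "card C = DIM('a)" using cardC by simp
      have finC: "finite C" using Cind by (rule aff_independent_finite)
      have WC: "W \<subseteq> C"
      proof
        fix x assume "x \<in> W"
        then have "x extreme_point_of P" "x \<in> F0" using EF0 \<open>W \<subseteq> E\<close> by (auto simp: W_def V_def vertices_def)
        then have "x extreme_point_of F0" using extreme_point_of_face F0f by (metis facet_of_imp_face_of)
        then show "x \<in> C" using F0C extreme_point_of_convex_hull by blast
      qed
      have finW: "finite W" using finV by (simp add: W_def)
      have "card S' \<le> card (lift_map ` W)" using S'W finW by (simp add: card_mono)
      also have "\<dots> \<le> card W" using finW by (rule card_image_le)
      also have "\<dots> \<le> card C" by (rule card_mono[OF finC WC])
      finally have cS': "card S' \<le> DIM('a)" using cardC' by simp
      have finS': "finite S'" using S'W finW finite_subset by blast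
      have "aff_dim F = aff_dim S'" using FS' by (simp add: aff_dim_convex_hull)
      also have "\<dots> \<le> int (card S') - 1" using aff_dim_le_card[OF finS'] by simp
      finally show False using cS' affF by linarith
    qed
    have "affine hull F = {v. snd v = (-(1/s) *\<^sub>R p) \<bullet> fst v + b/s}"
      unfolding ahF using sne by (auto simp: inner_pair p_def s_def field_simps)
    then show "\<exists>a c. affine hull F = {v. snd v = a \<bullet> fst v + c}" by blast
  qed
  then show ?thesis using finfacets by (simp add: L_def)
qed

theorem mainTheorem6:
  fixes P :: "'a::euclidean_space set"
  assumes "DIM('a) \<ge> 2"
    and "convex P" and "simplicial_polytope P" and "aff_dim P = int DIM('a)"
    and "generic_polytope P"
  shows "\<forall>G. G facet_of T_plus P \<longrightarrow>
           (\<exists>H. H facet_of P_plus P \<and> \<not> bounded H \<and> parallel_sets H G)"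
proof -
  have LP: "finite {F. F facet_of lifting P} \<and>
    (\<forall>F. F facet_of lifting P \<longrightarrow> (\<exists>a c. affine hull F = {v. snd v = a \<bullet> fst v + c}))"
    using lifting_props[OF assms] .
  define I where "I = {F. F facet_of lifting P}"
  have finI: "finite I" using LP by (simp add: I_def)
  define a where "a = (\<lambda>F. SOME a. \<exists>c. affine hull F = {v::'a\<times>real. snd v = a \<bullet> fst v + c})"
  define c where "c = (\<lambda>F. SOME c. affine hull F = {v::'a\<times>real. snd v = a F \<bullet> fst v + c})"
  have ac: "affine hull F = {v. snd v = a F \<bullet> fst v + c F}" if "F facet_of lifting P" for F
  proof -
    have "\<exists>a c. affine hull F = {v. snd v = a \<bullet> fst v + c}" using LP that by blast
    then have "\<exists>c. affine hull F = {v. snd v = a F \<bullet> fst v + c}" unfolding a_def by (rule someI_ex)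
    then show ?thesis unfolding c_def by (rule someI_ex)
  qed
  have up: "upper_halfspace {v. snd v = aa \<bullet> fst v + cc} = {v. aa \<bullet> fst v + cc \<le> snd v}"
    for aa :: 'a and cc :: real
  proof
    show "upper_halfspace {v. snd v = aa \<bullet> fst v + cc} \<subseteq> {v. aa \<bullet> fst v + cc \<le> snd v}"
      unfolding upper_halfspace_def by auto
    show "{v. aa \<bullet> fst v + cc \<le> snd v} \<subseteq> upper_halfspace {v. snd v = aa \<bullet> fst v + cc}"
    proof
      fix v :: "'a \<times> real" assume "v \<in> {v. aa \<bullet> fst v + cc \<le> snd v}"
      then show "v \<in> upper_halfspace {v. snd v = aa \<bullet> fst v + cc}"
        unfolding upper_halfspace_def by (intro CollectI bexI[of _ "(fst v, aa \<bullet> fst v + cc)"]) auto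
    qed
  qed
  have dir: "direction_of {v. snd v = aa \<bullet> fst v + cc} = {v. snd v = aa \<bullet> fst v}"
    for aa :: 'a and cc :: real
  proof
    show "direction_of {v. snd v = aa \<bullet> fst v + cc} \<subseteq> {v. snd v = aa \<bullet> fst v}"
      unfolding direction_of_def by (auto simp: inner_diff_right)
    show "{v. snd v = aa \<bullet> fst v} \<subseteq> direction_of {v. snd v = aa \<bullet> fst v + cc}"
    proof
      fix v :: "'a \<times> real" assume v: "v \<in> {v. snd v = aa \<bullet> fst v}"
      have "v = (v + (0, cc)) - (0, cc)" by simp
      moreover have "v + (0, cc) \<in> {v. snd v = aa \<bullet> fst v + cc}" using v by simp
      moreover have "((0::'a), cc) \<in> {v. snd v = aa \<bullet> fst v + cc}" by simp
      ultimately show "v \<in> direction_of {v. snd v = aa \<bullet> fst v + cc}"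
        unfolding direction_of_def by blast
    qed
  qed
  have PPe: "P_plus P = (\<Inter>F\<in>I. {v. a F \<bullet> fst v + c F \<le> snd v})"
  proof -
    have "{upper_halfspace (affine hull F) | F. F facet_of lifting P}
        = (\<lambda>F. upper_halfspace (affine hull F)) ` I" by (auto simp: I_def)
    also have "\<dots> = (\<lambda>F. {v. a F \<bullet> fst v + c F \<le> snd v}) ` I"
      by (rule image_cong[OF refl]) (simp add: I_def ac up)
    finally have "{upper_halfspace (affine hull F) | F. F facet_of lifting P}
        = (\<lambda>F. {v. a F \<bullet> fst v + c F \<le> snd v}) ` I" .
    then show ?thesis by (simp add: P_plus_def)
  qed
  have TTe: "T_plus P = (\<Inter>F\<in>I. {v. a F \<bullet> fst v \<le> snd v})"
  proof -
    have "{upper_halfspace (direction_of (affine hull F)) | F. F facet_of lifting P}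
        = (\<lambda>F. {v. a F \<bullet> fst v \<le> snd v}) ` I"
    proof -
      have e: "upper_halfspace (direction_of (affine hull F)) = {v. a F \<bullet> fst v \<le> snd v}"
        if "F \<in> I" for F
        using up[of "a F" 0] that by (simp add: I_def ac dir)
      have "{upper_halfspace (direction_of (affine hull F)) | F. F facet_of lifting P}
        = (\<lambda>F. upper_halfspace (direction_of (affine hull F))) ` I" by (auto simp: I_def)
      also have "\<dots> = (\<lambda>F. {v. a F \<bullet> fst v \<le> snd v}) ` I"
        by (rule image_cong[OF refl e])
      finally show ?thesis .
    qed
    then show ?thesis by (simp add: T_plus_def)
  qed
  show ?thesis
  proof (intro allI impI)
    fix G assume "G facet_of T_plus P"
    then show "\<exists>H. H facet_of P_plus P \<and> \<not> bounded H \<and> parallel_sets H G"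
      by (rule abstract_part[OF finI PPe TTe])
  qed
qed

end
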